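(* Let $K,L,F,Z,S$ be positive integers with $L\le K$, and suppose a $(K,L,F,Z,S)$ extended placement delivery array (EPDA) exists. Then for every positive integer $N$ there exists a $(K,L,M,N)$ multi-antenna coded caching scheme with $\frac{M}{N}=\frac{Z}{F}$ and subpacketization number $F$, in which the server can meet any demand vector $\mathbf{d}=(d_1,\dots,d_K)\in[N]^K$ with delivery time $T=\frac{S}{F}$.
   Context: Notation: $[n]=\{1,\dots,n\}$. EPDA: Let $K,L\ (\le K),F,Z,S$ be positive integers. An $F\times K$ array $\mathbf{A}=[a_{j,k}]$, $j\in[F]$, $k\in[K]$, whose entries are either a special symbol $\star$ or integers in $[S]$, is a $(K,L,F,Z,S)$ EPDA if: (C1) $\star$ appears exactly $Z$ times in each column; (C2) every integer in $[S]$ occurs at least once in $\mathbf{A}$; (C3) no integer appears more than once in any column; (C4) for each $s\in[S]$, let $\mathbf{A}^{(s)}$ be the subarray obtained by deleting all rows and all columns of $\mathbf{A}$ that do not contain $s$; then no row of $\mathbf{A}^{(s)}$ contains more than $L$ integer entries (of any value). $(K,L,M,N)$ multi-antenna coded caching system: a server holds $N$ files $W_1,\dots,W_N$, each of size one unit, and has $L$ transmit antennas; it serves $K$ single-antenna users over a MISO broadcast channel of capacity one file per unit time. User $k$ has a cache of size $M$ units ($0\le M\le N$). In the placement phase (before demands are known) the server fills caches with uncoded file content; $\mathcal{Z}_k$ denotes the content of cache $k$. In the delivery phase each user $k$ requests file $W_{d_k}$; the server sends vectors $\mathbf{x}(\tau)\in\mathbb{C}^L$, and user $k$ receives $y_k(\tau)=\mathbf{h}_k^T\mathbf{x}(\tau)+w_k(\tau)$,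 where $\mathbf{h}_k\in\mathbb{C}^L$ is user $k$'s channel vector; all nodes know all channel vectors perfectly, and the high-SNR regime is considered, i.e. the noise $w_k$ is neglected. A scheme is correct if each user $k$ can recover $W_{d_k}$ from $\mathcal{Z}_k$ and its received signals, for every demand vector. The subpacketization number is the number of equal-size subfiles into which each file is split; if each file is split into $F$ subfiles and the delivery consists of $S'$ transmissions each carrying (precoded combinations of) subfiles of size $1/F$, the delivery time is $T=S'/F$. The channel vectors are taken to be in general position (generic), so that for any set of at most $L-1$ users and a further user there is a vector in $\mathbb{C}^L$ orthogonal to the channels of the former but not of the latter. *)

theory Defs
  imports Complex_Main
begin

text \<open>An F x K array: rows j in {1..F}, columns k in {1..K};
  None represents the star symbol, Some s the integer s.\<close>

definition EPDA ::
  "nat \<Rightarrow> nat \<Rightarrow> nat \<Rightarrow> nat \<Rightarrow> nat \<Rightarrow> (nat \<Rightarrow> nat \<Rightarrow> nat option) \<Rightarrow> bool" where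
  "EPDA K L F Z S A \<longleftrightarrow>
     0 < K \<and> 0 < L \<and> L \<le> K \<and> 0 < F \<and> 0 < Z \<and> 0 < S \<and>
     \<comment> \<open>entries are star or integers in [S]\<close>
     (\<forall>j\<in>{1..F}. \<forall>k\<in>{1..K}. \<forall>s. A j k = Some s \<longrightarrow> s \<in> {1..S}) \<and>
     \<comment> \<open>C1\<close>
     (\<forall>k\<in>{1..K}. card {j\<in>{1..F}. A j k = None} = Z) \<and>
     \<comment> \<open>C2\<close>
     (\<forall>s\<in>{1..S}. \<exists>j\<in>{1..F}. \<exists>k\<in>{1..K}. A j k = Some s) \<and>
     \<comment> \<open>C3\<close>
     (\<forall>k\<in>{1..K}. \<forall>j1\<in>{1..F}. \<forall>j2\<in>{1..F}. \<forall>s.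
        A j1 k = Some s \<and> A j2 k = Some s \<longrightarrow> j1 = j2) \<and>
     \<comment> \<open>C4: in the subarray A^(s) (rows and columns containing s), every row
        has at most L integer entries\<close>
     (\<forall>s\<in>{1..S}. \<forall>j\<in>{1..F}. (\<exists>k\<in>{1..K}. A j k = Some s) \<longrightarrow>
        card {k\<in>{1..K}. (\<exists>j'\<in>{1..F}. A j' k = Some s) \<and> A j k \<noteq> None} \<le> L)"

text \<open>Vectors in C^L are functions nat => complex, components indexed by {1..L}.
  User k receives h_k^T x = sum_i h_k(i) x(i).\<close>

definition chan :: "nat \<Rightarrow> (nat \<Rightarrow> complex) \<Rightarrow> (nat \<Rightarrow> complex) \<Rightarrow> complex" where
  "chan L h x = (\<Sum>i=1..L. h i * x i)"

definition generic_channels :: "nat \<Rightarrow> nat \<Rightarrow> (nat \<Rightarrow> nat \<Rightarrow> complex) \<Rightarrow> bool" where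
  "generic_channels K L h \<longleftrightarrow>
     (\<forall>U k. U \<subseteq> {1..K} \<and> card U \<le> L - 1 \<and> k \<in> {1..K} \<and> k \<notin> U \<longrightarrow>
        (\<exists>v. (\<forall>u\<in>U. chan L (h u) v = 0) \<and> chan L (h k) v \<noteq> 0))"

text \<open>Uncoded placement with subpacketization F: file W_n (n in [N]) is split into
  F equal subfiles W_{n,j} (j in [F]); cache k stores the subfiles indexed by
  Zc k. The cache of size M units (a subfile has size 1/F) holds at most M*F subfiles.\<close>

definition placement_ok ::
  "nat \<Rightarrow> real \<Rightarrow> nat \<Rightarrow> nat \<Rightarrow> (nat \<Rightarrow> (nat \<times> nat) set) \<Rightarrow> bool" where
  "placement_ok K M N F Zc \<longleftrightarrow>
     0 \<le> M \<and> M \<le> real N \<and>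
     (\<forall>k\<in>{1..K}. Zc k \<subseteq> {1..N} \<times> {1..F} \<and> real (card (Zc k)) \<le> M * real F)"

text \<open>Linear delivery with Sd transmissions, each carrying precoded linear combinations
  of subfiles (each subfile one complex symbol, of size 1/F): in transmission tau
  (tau in [Sd]) antenna i sends x_tau(i) = sum_{n,j} c tau n j i * W n j.\<close>

definition transmit ::
  "nat \<Rightarrow> nat \<Rightarrow> (nat \<Rightarrow> nat \<Rightarrow> nat \<Rightarrow> nat \<Rightarrow> complex) \<Rightarrow> (nat \<Rightarrow> nat \<Rightarrow> complex)
     \<Rightarrow> nat \<Rightarrow> nat \<Rightarrow> complex" where
  "transmit N F c W tau i = (\<Sum>n=1..N. \<Sum>j=1..F. c tau n j i * W n j)"

text \<open>Correct delivery for demand d: every user k in [K] can recover file W_{d_k}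
  from its cache and received signals, i.e. any two libraries which agree on the
  cache of k and produce the same received signals at k agree on all subfiles of
  W_{d_k} (existence of a decoding function).\<close>

definition delivery_correct ::
  "nat \<Rightarrow> nat \<Rightarrow> nat \<Rightarrow> nat \<Rightarrow> nat \<Rightarrow> (nat \<Rightarrow> (nat \<times> nat) set) \<Rightarrow> (nat \<Rightarrow> nat \<Rightarrow> complex)
     \<Rightarrow> (nat \<Rightarrow> nat) \<Rightarrow> (nat \<Rightarrow> nat \<Rightarrow> nat \<Rightarrow> nat \<Rightarrow> complex) \<Rightarrow> bool" where
  "delivery_correct K L N F Sd Zc h d c \<longleftrightarrow>
     (\<forall>k\<in>{1..K}. \<forall>W W' :: nat \<Rightarrow> nat \<Rightarrow> complex.
        (\<forall>(n, j)\<in>Zc k. W n j = W' n j) \<and>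
        (\<forall>tau\<in>{1..Sd}. chan L (h k) (transmit N F c W tau) = chan L (h k) (transmit N F c W' tau))
        \<longrightarrow> (\<forall>j\<in>{1..F}. W (d k) j = W' (d k) j))"

definition mac_scheme ::
  "nat \<Rightarrow> nat \<Rightarrow> real \<Rightarrow> nat \<Rightarrow> nat \<Rightarrow> real \<Rightarrow> (nat \<Rightarrow> (nat \<times> nat) set) \<Rightarrow> bool" where
  "mac_scheme K L M N F T Zc \<longleftrightarrow>
     placement_ok K M N F Zc \<and>
     (\<exists>Sd::nat. T = real Sd / real F \<and>
       (\<forall>h. generic_channels K L h \<longrightarrow>
          (\<forall>d. (\<forall>k\<in>{1..K}. d k \<in> {1..N}) \<longrightarrow>
             (\<exists>c. delivery_correct K L N F Sd Zc h d c))))"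

end

theory Submission
  imports Defs
begin

lemma sum_single_nz:
  assumes "finite A" "a \<in> A" "\<And>x. x \<in> A \<Longrightarrow> x \<noteq> a \<Longrightarrow> f x = 0"
  shows "sum f A = (f a :: 'b::comm_monoid_add)"
proof -
  have "sum f A = sum f {a}"
    by (rule sum.mono_neutral_right) (use assms in auto)
  then show ?thesis by simp
qed

lemma chan_transmit:
  "chan L h (transmit N F c W tau) = (\<Sum>n=1..N. \<Sum>j=1..F. chan L h (c tau n j) * W n j)"
proof -
  have "chan L h (transmit N F c W tau) = (\<Sum>i=1..L. \<Sum>n=1..N. \<Sum>j=1..F. h i * c tau n j i * W n j)"
    unfolding chan_def transmit_def by (simp add: sum_distrib_left mult.assoc)
  also have "\<dots> = (\<Sum>n=1..N. \<Sum>i=1..L. \<Sum>j=1..F. h i * c tau n j i * W n j)"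
    by (rule sum.swap)
  also have "\<dots> = (\<Sum>n=1..N. \<Sum>j=1..F. \<Sum>i=1..L. h i * c tau n j i * W n j)"
    by (rule sum.cong[OF refl], rule sum.swap)
  also have "\<dots> = (\<Sum>n=1..N. \<Sum>j=1..F. chan L h (c tau n j) * W n j)"
    unfolding chan_def by (simp add: sum_distrib_right)
  finally show ?thesis .
qed

lemma chan_sum:
  "chan L h (\<lambda>i. \<Sum>k\<in>B. f k i) = (\<Sum>k\<in>B. chan L h (f k))"
  unfolding chan_def by (simp add: sum_distrib_left) (rule sum.swap)

definition Ucol where
  "Ucol K F A s j k' = {u\<in>{1..K}. u \<noteq> k' \<and> (\<exists>j'\<in>{1..F}. A j' u = Some s) \<and> A j u \<noteq> None}"

lemma delivery_lemma:
  fixes A :: "nat \<Rightarrow> nat \<Rightarrow> nat option"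
  assumes E: "EPDA K L F Z S A" and G: "generic_channels K L h"
    and d: "\<forall>k\<in>{1..K}. d k \<in> {1..N}"
  defines "Zc \<equiv> (\<lambda>k. {(n, j). n \<in> {1..N} \<and> j \<in> {1..F} \<and> A j k = None})"
  defines "v \<equiv> (\<lambda>s j k'. SOME v. (\<forall>u\<in>Ucol K F A s j k'. chan L (h u) v = 0) \<and> chan L (h k') v \<noteq> 0)"
  defines "c \<equiv> (\<lambda>s n j i. \<Sum>k'\<in>{k'\<in>{1..K}. A j k' = Some s \<and> d k' = n}. v s j k' i)"
  shows "delivery_correct K L N F S Zc h d c"
proof -
  have ent: "\<And>j k s. j\<in>{1..F} \<Longrightarrow> k\<in>{1..K} \<Longrightarrow> A j k = Some s \<Longrightarrow> s \<in> {1..S}"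
    using E unfolding EPDA_def by blast
  have C3: "\<And>k j1 j2 s. k\<in>{1..K} \<Longrightarrow> j1\<in>{1..F} \<Longrightarrow> j2\<in>{1..F} \<Longrightarrow> A j1 k = Some s \<Longrightarrow> A j2 k = Some s \<Longrightarrow> j1 = j2"
    using E unfolding EPDA_def by blast
  have C4: "\<And>s j. s\<in>{1..S} \<Longrightarrow> j\<in>{1..F} \<Longrightarrow> (\<exists>k\<in>{1..K}. A j k = Some s) \<Longrightarrow>
        card {k\<in>{1..K}. (\<exists>j'\<in>{1..F}. A j' k = Some s) \<and> A j k \<noteq> None} \<le> L"
    using E unfolding EPDA_def by blast
  have vprop: "(\<forall>u\<in>Ucol K F A s j k'. chan L (h u) (v s j k') = 0) \<and> chan L (h k') (v s j k') \<noteq> 0"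
    if j: "j\<in>{1..F}" and k': "k'\<in>{1..K}" and a: "A j k' = Some s" for s j k'
  proof -
    define B where "B = {k\<in>{1..K}. (\<exists>j'\<in>{1..F}. A j' k = Some s) \<and> A j k \<noteq> None}"
    have s: "s \<in> {1..S}" using ent[OF j k' a] .
    have cB: "card B \<le> L" unfolding B_def using C4[OF s j] k' a by blast
    have kB: "k' \<in> B" unfolding B_def using k' a j by auto
    have U: "Ucol K F A s j k' = B - {k'}" unfolding B_def Ucol_def by auto
    have "card (Ucol K F A s j k') = card B - 1" unfolding U using kB
      by (simp add: B_def)
    then have "card (Ucol K F A s j k') \<le> L - 1" using cB by simp
    moreover have "Ucol K F A s j k' \<subseteq> {1..K}" "k' \<notin> Ucol K F A s j k'" unfolding Ucol_def by auto
    ultimately have "\<exists>v. (\<forall>u\<in>Ucol K F A s j k'. chan L (h u) v = 0) \<and> chan L (h k') v \<noteq> 0"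
      using G k' unfolding generic_channels_def by blast
    then show ?thesis unfolding v_def by (rule someI_ex)
  qed
  show ?thesis unfolding delivery_correct_def
  proof (intro ballI allI impI)
    fix k W W' j0
    assume k: "k \<in> {1..K}" and j0: "j0 \<in> {1..F}"
    assume H: "(\<forall>(n, j)\<in>Zc k. W n j = W' n j) \<and>
        (\<forall>tau\<in>{1..S}. chan L (h k) (transmit N F c W tau) = chan L (h k) (transmit N F c W' tau))"
    show "W (d k) j0 = W' (d k) j0"
    proof (cases "A j0 k")
      case None
      then have "(d k, j0) \<in> Zc k" using d k j0 unfolding Zc_def by auto
      then show ?thesis using H by auto
    next
      case (Some s)
      have s: "s \<in> {1..S}" using ent[OF j0 k Some] .
      define g where "g n j = chan L (h k) (c s n j)" for n j
      have g_eq: "g n j = (\<Sum>k'\<in>{k'\<in>{1..K}. A j k' = Some s \<and> d k' = n}. chan L (h k) (v s j k'))" for n j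
        unfolding g_def c_def by (rule chan_sum)
      have eq: "(\<Sum>n=1..N. \<Sum>j=1..F. g n j * W n j) = (\<Sum>n=1..N. \<Sum>j=1..F. g n j * W' n j)"
        using H s unfolding g_def chan_transmit by blast
      have zero: "g n j * (W n j - W' n j) = 0"
        if n: "n \<in> {1..N}" and j: "j \<in> {1..F}" and ne: "(n, j) \<noteq> (d k, j0)" for n j
      proof (cases "A j k = None")
        case True
        then have "(n, j) \<in> Zc k" using n j unfolding Zc_def by auto
        then show ?thesis using H by auto
      next
        case False
        have "g n j = 0" unfolding g_eq
        proof (rule sum.neutral, rule ballI)
          fix k' assume k'm: "k' \<in> {k'\<in>{1..K}. A j k' = Some s \<and> d k' = n}"
          have "k' \<noteq> k"
          proof
            assume "k' = k"
            then have "A j k = Some s" "d k = n" using k'm by auto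
            then have "j = j0" using C3[OF k j j0] Some by auto
            then show False using ne \<open>d k = n\<close> by auto
          qed
          then have "k \<in> Ucol K F A s j k'" unfolding Ucol_def using k j0 Some False by auto
          then show "chan L (h k) (v s j k') = 0" using vprop[OF j _ _] k'm by auto
        qed
        then show ?thesis by simp
      qed
      have gk: "g (d k) j0 = chan L (h k) (v s j0 k)" unfolding g_eq
      proof (rule sum_single_nz)
        show "k \<in> {k'\<in>{1..K}. A j0 k' = Some s \<and> d k' = d k}" using k Some by auto
        fix k' assume k'm: "k' \<in> {k'\<in>{1..K}. A j0 k' = Some s \<and> d k' = d k}" and ne: "k' \<noteq> k"
        then have "k \<in> Ucol K F A s j0 k'" unfolding Ucol_def using k j0 Some by auto
        then show "chan L (h k) (v s j0 k') = 0" using vprop[OF j0 _ _] k'm by auto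
      qed simp
      have gnz: "g (d k) j0 \<noteq> 0" unfolding gk using vprop[OF j0 k Some] by blast
      have "0 = (\<Sum>n=1..N. \<Sum>j=1..F. g n j * (W n j - W' n j))"
        using eq by (simp add: right_diff_distrib sum_subtractf)
      also have "\<dots> = (\<Sum>j=1..F. g (d k) j * (W (d k) j - W' (d k) j))"
        by (rule sum_single_nz) (use d k zero in \<open>auto intro!: sum.neutral\<close>)
      also have "\<dots> = g (d k) j0 * (W (d k) j0 - W' (d k) j0)"
        by (rule sum_single_nz) (use d k j0 zero in auto)
      finally show ?thesis using gnz by simp
    qed
  qed
qed

theorem theorem1:
  fixes K L F Z S :: nat and A :: "nat \<Rightarrow> nat \<Rightarrow> nat option"
  assumes "0 < K" "0 < L" "0 < F" "0 < Z" "0 < S" "L \<le> K"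
    and "EPDA K L F Z S A"
  shows "\<forall>N::nat. 0 < N \<longrightarrow>
           (\<exists>M::real. \<exists>Zc. M / real N = real Z / real F \<and>
              mac_scheme K L M N F (real S / real F) Zc)"
proof (intro allI impI)
  fix N :: nat assume N: "0 < N"
  define Zc where "Zc = (\<lambda>k. {(n, j). n \<in> {1..N} \<and> j \<in> {1..F} \<and> A j k = None})"
  define M where "M = real N * real Z / real F"
  have C1: "\<forall>k\<in>{1..K}. card {j\<in>{1..F}. A j k = None} = Z"
    using assms(7) unfolding EPDA_def by blast
  have ZF: "Z \<le> F"
  proof -
    have "card {j\<in>{1..F}. A j 1 = None} \<le> card {1..F}" by (rule card_mono) auto
    then show ?thesis using C1 assms(1) by auto
  qed
  have Zck: "Zc k = {1..N} \<times> {j\<in>{1..F}. A j k = None}" for k unfolding Zc_def by auto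
  have pl: "placement_ok K M N F Zc"
    unfolding placement_ok_def
  proof (intro conjI ballI)
    show "0 \<le> M" unfolding M_def by simp
    have "real Z / real F \<le> 1" using ZF assms(3) by simp
    then have "real N * (real Z / real F) \<le> real N * 1" by (intro mult_left_mono) auto
    then show "M \<le> real N" unfolding M_def by simp
  next
    fix k assume k: "k \<in> {1..K}"
    show "Zc k \<subseteq> {1..N} \<times> {1..F}" unfolding Zck by auto
    have "card (Zc k) = N * Z" unfolding Zck card_cartesian_product using C1 k by simp
    then show "real (card (Zc k)) \<le> M * real F" unfolding M_def using assms(3) by simp
  qed
  have "mac_scheme K L M N F (real S / real F) Zc"
    unfolding mac_scheme_def
  proof (intro conjI pl exI[of _ S] allI impI)
    fix h d assume G: "generic_channels K L h" and d: "\<forall>k\<in>{1..K}. d k \<in> {1..N}"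
    show "\<exists>c. delivery_correct K L N F S Zc h d c"
      using delivery_lemma[OF assms(7) G d] unfolding Zc_def by blast
  qed simp
  moreover have "M / real N = real Z / real F" unfolding M_def using N by simp
  ultimately show "\<exists>M::real. \<exists>Zc. M / real N = real Z / real F \<and>
              mac_scheme K L M N F (real S / real F) Zc" by blast
qed

end
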